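(* Let $x,y$ be non-commuting indeterminates and $C=xyx^{-1}y^{-1}$. Let $(R_n)_{n\in\mathbb Z}$ be the solution of $$R_{n+1}CR_{n-1}=R_n^2+1\qquad(n\in\mathbb Z)$$ with $R_0=yxy^{-1}$ and $R_1=y$. Set $$y_1=R_1R_0^{-1},\qquad y_2=R_1^{-1}R_0^{-1},\qquad y_3=R_1^{-1}R_0.$$ Then, as formal power series in a central variable $t$, $$\sum_{n\ge0}t^nR_n=\Big(1-t\big(1-t(1-ty_3)^{-1}y_2\big)^{-1}y_1\Big)^{-1}R_0.$$
   Context: Work in the free skew field (non-commutative rational functions) over $\mathbb C$ generated by $x,y$. Formal power series in $t$ with coefficients in this skew field are used, with $t$ commuting with everything. The inverse $(1-tA)^{-1}$ means $\sum_{k\ge0}t^kA^k$. *)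

theory Defs
  imports "HOL-Computational_Algebra.Formal_Power_Series"
begin

definition commC :: "'a::division_ring \<Rightarrow> 'a \<Rightarrow> 'a" where
  "commC x y = x * y * inverse x * inverse y"

end

theory Submission
  imports Defs
begin

unbundle fps_syntax

lemma invc1[simp]: "(b::'a::division_ring) \<noteq> 0 \<Longrightarrow> inverse b * (b * z) = z"
  by (simp add: mult.assoc[symmetric])
lemma invc2[simp]: "(b::'a::division_ring) \<noteq> 0 \<Longrightarrow> b * (inverse b * z) = z"
  by (simp add: mult.assoc[symmetric])

lemma L1:
  fixes a b c Cc :: "'a::division_ring"
  assumes a: "a \<noteq> 0" and b: "b \<noteq> 0" and H: "a * b = b * Cc * a"
    and r: "c * Cc * a = b * b + 1"
  shows "Cc = inverse b * a * b * inverse a"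
    and "c = (b + inverse b) * inverse a * b"
    and "b * c = c * Cc * b"
proof -
  have "inverse b * (a * b) * inverse a = inverse b * (b * Cc * a) * inverse a" using H by simp
  also have "\<dots> = Cc" using a b by (simp add: mult.assoc)
  finally show C: "Cc = inverse b * a * b * inverse a" by (simp add: mult.assoc)
  have "c * inverse b * a * b = b * b + 1" using r C a by (simp add: mult.assoc)
  hence "c * inverse b * a * b * inverse b * inverse a * b = (b * b + 1) * inverse b * inverse a * b" by simp
  hence "c = (b * b + 1) * inverse b * inverse a * b" using a b by (simp add: mult.assoc)
  also have "(b * b + 1) * inverse b = b + inverse b" using b by (simp add: distrib_right mult.assoc)
  finally show c: "c = (b + inverse b) * inverse a * b" .
  have "b * c = (b * b + 1) * inverse a * b" using b by (simp add: c distrib_left distrib_right mult.assoc)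
  moreover have "c * Cc * b = (b * b + 1) * inverse a * b"
    using a b by (simp add: c C distrib_left distrib_right mult.assoc)
  ultimately show "b * c = c * Cc * b" by metis
qed

lemma L2:
  fixes a b c :: "'a::division_ring"
  assumes a: "a \<noteq> 0" and b: "b \<noteq> 0" and c0: "c \<noteq> 0"
    and c: "c = (b + inverse b) * inverse a * b"
  shows "c * inverse b + inverse c * inverse b + inverse c * b
       = b * inverse a + inverse b * inverse a + inverse b * a"
proof -
  define P where "P = b + inverse b"
  have P: "P \<noteq> 0" using c c0 P_def by auto
  have c': "c = P * (inverse a * b)" using c P_def by (simp add: mult.assoc)
  have ci: "inverse c = inverse b * a * inverse P"
    using a b P by (simp add: c' nonzero_inverse_mult_distrib mult.assoc)
  have 1: "c * inverse b = b * inverse a + inverse b * inverse a"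
    using b by (simp add: c' P_def mult.assoc distrib_right)
  have "inverse c * inverse b + inverse c * b = inverse c * P"
    by (simp add: P_def distrib_left add.commute)
  also have "\<dots> = inverse b * a" using P by (simp add: ci mult.assoc)
  finally show ?thesis using 1 by (simp add: add.assoc)
qed

lemma seqlin:
  fixes r :: "nat \<Rightarrow> 'a::division_ring"
  assumes nz: "\<And>k. r k \<noteq> 0"
    and rec: "\<And>k. r (Suc (Suc k)) * Cc * r k = r (Suc k) * r (Suc k) + 1"
    and H0: "r 0 * r 1 = r 1 * Cc * r 0"
  shows "r (Suc (Suc k)) = (r 1 * inverse (r 0) + inverse (r 1) * inverse (r 0) + inverse (r 1) * r 0) * r (Suc k)
           - (inverse (r 1) * r 0) * (r 1 * inverse (r 0)) * r k"
proof -
  have H: "r k * r (Suc k) = r (Suc k) * Cc * r k" for k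
  proof (induction k)
    case 0 then show ?case using H0 by simp
  next
    case (Suc k) then show ?case using L1(3)[OF nz nz Suc rec] by simp
  qed
  define K where "K k = r (Suc k) * inverse (r k) + inverse (r (Suc k)) * inverse (r k) + inverse (r (Suc k)) * r k" for k
  have KS: "K (Suc k) = K k" for k
    unfolding K_def by (rule L2[OF nz nz nz L1(2)[OF nz nz H rec]])
  have K0: "K k = K 0" for k by (induction k) (simp_all add: KS)
  have Ck: "Cc = inverse (r (Suc k)) * r k * r (Suc k) * inverse (r k)" for k using L1(1)[OF nz nz H rec] .
  have C: "Cc = inverse (r 1) * r 0 * r 1 * inverse (r 0)" using Ck[of 0] by simp
  have "r (Suc (Suc k)) = (r (Suc k) + inverse (r (Suc k))) * inverse (r k) * r (Suc k)"
    using L1(2)[OF nz nz H rec] .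
  also have "\<dots> = K k * r (Suc k) - Cc * r k"
    using nz[of k] nz[of "Suc k"] unfolding K_def Ck[of k] by (simp add: distrib_right mult.assoc)
  also have "\<dots> = K 0 * r (Suc k) - Cc * r k" using K0 by simp
  finally show ?thesis unfolding K_def C by (simp add: mult.assoc)
qed

lemma fpsmain:
  fixes r :: "nat \<Rightarrow> 'a::division_ring" and y1 y2 y3 :: 'a
  assumes n0: "r 0 \<noteq> 0" and n1: "r 1 \<noteq> 0"
    and y1: "y1 = r 1 * inverse (r 0)" and y2: "y2 = inverse (r 1) * inverse (r 0)"
    and y3: "y3 = inverse (r 1) * r 0"
    and lin: "\<And>k. r (Suc (Suc k)) = (y1 + y2 + y3) * r (Suc k) - y3 * y1 * r k"
  shows "Abs_fps r = inverse (1 - fps_X * inverse (1 - fps_X * inverse (1 - fps_X * fps_const y3)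
                                     * fps_const y2) * fps_const y1) * fps_const (r 0)"
proof -
  define F where "F = Abs_fps r"
  define c0 where "c0 = fps_const (r 0)"
  define c1 where "c1 = fps_const y1"
  define c2 where "c2 = fps_const y2"
  define c3 where "c3 = fps_const y3"
  define B where "B = inverse (1 - fps_X * c3)"
  define A where "A = inverse (1 - fps_X * B * c2)"
  define D where "D = 1 - fps_X * A * c1"
  define G where "G = F - c0 - fps_X * (c1 * F)"
  have g1: "y1 * r 0 = r 1" using n0 by (simp add: y1 mult.assoc)
  have eq1: "(1 - fps_X * c3) * G = fps_X * (c2 * (F - c0))"
  proof (rule fps_ext)
    fix n
    show "((1 - fps_X * c3) * G) $ n = (fps_X * (c2 * (F - c0))) $ n"
    proof (cases n)
      case 0 then show ?thesis
        by (simp add: G_def F_def c0_def c1_def c3_def mult.assoc algebra_simps)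
    next
      case (Suc m)
      show ?thesis
      proof (cases m)
        case 0 then show ?thesis using Suc g1
          by (simp add: G_def F_def c0_def c1_def c2_def c3_def mult.assoc algebra_simps)
      next
        case (Suc k)
        have "r (Suc (Suc k)) - y1 * r (Suc k) - y3 * (r (Suc k) - y1 * r k) = y2 * r (Suc k)"
          by (subst lin) (simp add: algebra_simps)
        then show ?thesis using \<open>n = Suc m\<close> Suc
          by (simp add: G_def F_def c0_def c1_def c2_def c3_def mult.assoc algebra_simps)
      qed
    qed
  qed
  have Binv: "B * (1 - fps_X * c3) = 1" unfolding B_def by (rule inverse_mult_eq_1) simp
  have "G = B * ((1 - fps_X * c3) * G)" using Binv by (simp add: mult.assoc[symmetric])
  also have "\<dots> = fps_X * (B * (c2 * (F - c0)))"
    unfolding eq1 by (metis mult.assoc fps_mult_fps_X_commute)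
  finally have G2: "G = fps_X * (B * (c2 * (F - c0)))" .
  have eq2: "(1 - fps_X * B * c2) * (F - c0) = fps_X * (c1 * F)"
    using G2 unfolding G_def by (simp add: algebra_simps mult.assoc)
  have Ainv: "A * (1 - fps_X * B * c2) = 1" unfolding A_def by (rule inverse_mult_eq_1) (simp add: mult.assoc)
  have "F - c0 = A * ((1 - fps_X * B * c2) * (F - c0))" using Ainv by (simp add: mult.assoc[symmetric])
  also have "\<dots> = fps_X * (A * (c1 * F))"
    unfolding eq2 by (metis mult.assoc fps_mult_fps_X_commute)
  finally have eq3: "F - c0 = fps_X * (A * (c1 * F))" .
  have DF: "D * F = c0" unfolding D_def using eq3 by (simp add: algebra_simps mult.assoc)
  have Dinv: "inverse D * D = 1" unfolding D_def by (rule inverse_mult_eq_1) (simp add: mult.assoc)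
  have "inverse D * c0 = F" using Dinv by (simp add: DF[symmetric] mult.assoc[symmetric])
  then show ?thesis unfolding F_def D_def A_def B_def c0_def c1_def c2_def c3_def by simp
qed

theorem theorem3p3:
  fixes x y :: "'a::{division_ring, ring_char_0}" and R :: "int \<Rightarrow> 'a"
  assumes "x \<noteq> 0" and "y \<noteq> 0" and "x * y \<noteq> y * x"
    and rec: "\<And>n. R (n + 1) * commC x y * R (n - 1) = (R n)\<^sup>2 + 1"
    and R0: "R 0 = y * x * inverse y" and R1: "R 1 = y"
    and Rnz: "\<And>n. R n \<noteq> 0"
  shows "Abs_fps (\<lambda>n. R (int n)) =
    inverse (1 - fps_X * inverse (1 - fps_X * inverse (1 - fps_X * fps_const (inverse (R 1) * R 0))
                                     * fps_const (inverse (R 1) * inverse (R 0)))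
                 * fps_const (R 1 * inverse (R 0)))
    * fps_const (R 0)"
proof -
  define r where "r n = R (int n)" for n
  have nz: "r k \<noteq> 0" for k using Rnz r_def by simp
  have rr: "r (Suc (Suc k)) * commC x y * r k = r (Suc k) * r (Suc k) + 1" for k
    using rec[of "int k + 1"] unfolding r_def by (simp add: power2_eq_square add.assoc add.commute)
  have H0: "r 0 * r 1 = r 1 * commC x y * r 0"
    unfolding r_def using assms(1,2) by (simp add: R0 R1 commC_def mult.assoc)
  have lin: "r (Suc (Suc k)) = (r 1 * inverse (r 0) + inverse (r 1) * inverse (r 0) + inverse (r 1) * r 0) * r (Suc k)
           - (inverse (r 1) * r 0) * (r 1 * inverse (r 0)) * r k" for k
    by (rule seqlin[OF nz rr H0])
  have "Abs_fps r = inverse (1 - fps_X * inverse (1 - fps_X * inverse (1 - fps_X * fps_const (inverse (r 1) * r 0))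
                                     * fps_const (inverse (r 1) * inverse (r 0))) * fps_const (r 1 * inverse (r 0))) * fps_const (r 0)"
    by (rule fpsmain[OF nz nz refl refl refl lin])
  moreover have "r 0 = R 0" "r 1 = R 1" by (simp_all add: r_def)
  ultimately show ?thesis by (simp add: r_def[abs_def])
qed

end
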